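(* Let $g$ be a Morse isometry of a proper geodesic space $X$ with poles $g^+,g^-$. Then for every point $x\in X$, $g^n(x)\to g^+$ and $g^{-n}(x)\to g^-$ as $n\to+\infty$.
   Context: A Morse gauge is a function $N:[1,\infty)\times[0,\infty)\to[0,\infty)$; a (quasi-)geodesic $\gamma$ is $N$-Morse if every $(\lambda,\epsilon)$-quasi-geodesic with endpoints on $\gamma$ lies in the $N(\lambda,\epsilon)$-neighborhood of $\gamma$. $\partial_M X$ is the set of Morse geodesic rays modulo finite Hausdorff distance; isometries act by $[\alpha]\mapsto[g\circ\alpha]$. With $x_0\in X$ and $x_n=g^n(x_0)$, an isometry $g$ is Morse if there are a Morse gauge $N$ and geodesics $[x_i,x_{i+1}]$ whose bi-infinite concatenation is an $N$-Morse quasi-geodesic. A Morse isometry has exactly two fixed points in $\partial_M X$, its poles $g^+$ and $g^-$ (the endpoints of a Morse bi-infinite geodesic at finite Hausdorff distance from this concatenation, $g^+$ corresponding to the direction $n\to+\infty$ and $g^-$ to $n\to-\infty$). For $y_n\in X$ and $p\in\partial_M X$, $y_n\to p$ means: for a (equivalently any) basepoint $x$, there exist a Morse gauge $N$ and $N$-Morse geodesics $[x,y_n]$ such that every subsequence of $([x,y_n])$ has a further subsequence converging uniformly on compact sets to a geodesic ray $\gamma$ with $\gamma(0)=x$ and $[\gamma]=p$. *)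

theory Defs
  imports "HOL-Analysis.Analysis"
begin

definition proper_space :: "'a::metric_space itself \<Rightarrow> bool" where
  "proper_space _ \<longleftrightarrow> (\<forall>(x::'a) r. compact (cball x r))"

definition geodesic_seg :: "(real \<Rightarrow> 'a::metric_space) \<Rightarrow> 'a \<Rightarrow> 'a \<Rightarrow> bool" where
  "geodesic_seg \<sigma> x y \<longleftrightarrow> \<sigma> 0 = x \<and> \<sigma> (dist x y) = y \<and>
     (\<forall>s\<in>{0..dist x y}. \<forall>t\<in>{0..dist x y}. dist (\<sigma> s) (\<sigma> t) = \<bar>s - t\<bar>)"

definition geodesic_space :: "'a::metric_space itself \<Rightarrow> bool" where
  "geodesic_space _ \<longleftrightarrow> (\<forall>(x::'a) y. \<exists>\<sigma>. geodesic_seg \<sigma> x y)"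

definition geodesic_ray :: "(real \<Rightarrow> 'a::metric_space) \<Rightarrow> bool" where
  "geodesic_ray \<alpha> \<longleftrightarrow> (\<forall>s\<in>{0..}. \<forall>t\<in>{0..}. dist (\<alpha> s) (\<alpha> t) = \<bar>s - t\<bar>)"

definition biinf_geodesic :: "(real \<Rightarrow> 'a::metric_space) \<Rightarrow> bool" where
  "biinf_geodesic c \<longleftrightarrow> (\<forall>s t. dist (c s) (c t) = \<bar>s - t\<bar>)"

definition quasi_geodesic_on :: "real set \<Rightarrow> real \<Rightarrow> real \<Rightarrow> (real \<Rightarrow> 'a::metric_space) \<Rightarrow> bool" where
  "quasi_geodesic_on I lam eps q \<longleftrightarrow> lam \<ge> 1 \<and> eps \<ge> 0 \<and>
     (\<forall>s\<in>I. \<forall>t\<in>I. \<bar>s - t\<bar> / lam - eps \<le> dist (q s) (q t) \<and>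
                    dist (q s) (q t) \<le> lam * \<bar>s - t\<bar> + eps)"

definition fin_hausdorff :: "'a::metric_space set \<Rightarrow> 'a set \<Rightarrow> bool" where
  "fin_hausdorff S T \<longleftrightarrow> (\<exists>C. (\<forall>x\<in>S. infdist x T \<le> C) \<and> (\<forall>y\<in>T. infdist y S \<le> C))"

definition morse_gauge :: "(real \<Rightarrow> real \<Rightarrow> real) \<Rightarrow> bool" where
  "morse_gauge N \<longleftrightarrow> (\<forall>lam eps. N lam eps \<ge> 0)"

definition N_morse_on :: "(real \<Rightarrow> real \<Rightarrow> real) \<Rightarrow> real set \<Rightarrow> (real \<Rightarrow> 'a::metric_space) \<Rightarrow> bool" where
  "N_morse_on N I \<gamma> \<longleftrightarrow> morse_gauge N \<and>
     (\<forall>lam eps (q::real \<Rightarrow> 'a) a b. a \<le> b \<longrightarrow> quasi_geodesic_on {a..b} lam eps q \<longrightarrow>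
        q a \<in> \<gamma> ` I \<longrightarrow> q b \<in> \<gamma> ` I \<longrightarrow>
        (\<forall>t\<in>{a..b}. infdist (q t) (\<gamma> ` I) \<le> N lam eps))"

definition morse_ray :: "(real \<Rightarrow> 'a::metric_space) \<Rightarrow> bool" where
  "morse_ray \<alpha> \<longleftrightarrow> geodesic_ray \<alpha> \<and> (\<exists>N. N_morse_on N {0..} \<alpha>)"

definition morse_class :: "(real \<Rightarrow> 'a::metric_space) \<Rightarrow> (real \<Rightarrow> 'a) set" where
  "morse_class \<alpha> = {\<beta>. morse_ray \<beta> \<and> fin_hausdorff (\<alpha> ` {0..}) (\<beta> ` {0..})}"

definition morse_boundary :: "(real \<Rightarrow> 'a::metric_space) set set" where
  "morse_boundary = {morse_class \<alpha> | \<alpha>. morse_ray \<alpha>}"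

text \<open>Convergence y_n \<rightarrow> p (for every basepoint x): there exist a Morse gauge N
  and N-Morse geodesics [x,y_n] such that every subsequence has a further subsequence
  converging uniformly on compact sets to a geodesic ray gamma with gamma(0) = x and
  [gamma] = p.  A segment is extended constantly beyond its endpoint (t \<mapsto> sigma (min t L)).\<close>
definition converges_to_boundary :: "(nat \<Rightarrow> 'a::metric_space) \<Rightarrow> (real \<Rightarrow> 'a) set \<Rightarrow> bool" where
  "converges_to_boundary y p \<longleftrightarrow> p \<in> morse_boundary \<and>
     (\<forall>x::'a. \<exists>N \<sigma>. (\<forall>n. geodesic_seg (\<sigma> n) x (y n) \<and> N_morse_on N {0..dist x (y n)} (\<sigma> n)) \<and>
        (\<forall>r::nat\<Rightarrow>nat. strict_mono r \<longrightarrow>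
           (\<exists>s::nat\<Rightarrow>nat. strict_mono s \<and> (\<exists>\<gamma>. geodesic_ray \<gamma> \<and> \<gamma> 0 = x \<and> morse_class \<gamma> = p \<and>
              (\<forall>T\<ge>0. \<forall>e>0. \<forall>\<^sub>F k in sequentially. \<forall>t\<in>{0..T}.
                  dist (\<sigma> (r (s k)) (min t (dist x (y (r (s k)))))) (\<gamma> t) < e)))))"

definition isometry :: "('a::metric_space \<Rightarrow> 'a) \<Rightarrow> bool" where
  "isometry g \<longleftrightarrow> bij g \<and> (\<forall>x y. dist (g x) (g y) = dist x y)"

definition gpow :: "('a \<Rightarrow> 'a) \<Rightarrow> int \<Rightarrow> 'a \<Rightarrow> 'a" where
  "gpow g i = (if 0 \<le> i then g ^^ nat i else inv g ^^ nat (- i))"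

text \<open>Concatenation of the segments sigma i : [x_i, x_{i+1}] (each of length
  L = dist x0 (g x0)), parametrised by arc length on the real line.\<close>
definition concat_path :: "('a::metric_space \<Rightarrow> 'a) \<Rightarrow> 'a \<Rightarrow> (int \<Rightarrow> real \<Rightarrow> 'a) \<Rightarrow> real \<Rightarrow> 'a" where
  "concat_path g x0 \<sigma> t =
     (let L = dist x0 (g x0); i = \<lfloor>t / L\<rfloor> in \<sigma> i (t - L * of_int i))"

definition morse_concat :: "('a::metric_space \<Rightarrow> 'a) \<Rightarrow> 'a \<Rightarrow> (int \<Rightarrow> real \<Rightarrow> 'a) \<Rightarrow> (real \<Rightarrow> real \<Rightarrow> real) \<Rightarrow> bool" where
  "morse_concat g x0 \<sigma> N \<longleftrightarrow> 0 < dist x0 (g x0) \<and>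
     (\<forall>i. geodesic_seg (\<sigma> i) (gpow g i x0) (gpow g (i + 1) x0)) \<and>
     (\<exists>lam eps. quasi_geodesic_on UNIV lam eps (concat_path g x0 \<sigma>)) \<and>
     N_morse_on N UNIV (concat_path g x0 \<sigma>)"

definition morse_isometry :: "('a::metric_space \<Rightarrow> 'a) \<Rightarrow> bool" where
  "morse_isometry g \<longleftrightarrow> isometry g \<and> (\<exists>x0 \<sigma> N. morse_concat g x0 \<sigma> N)"

text \<open>Poles: c is a Morse bi-infinite geodesic at finite Hausdorff distance from the
  concatenation, oriented so that c(t), t \<rightarrow> +\<infinity>, follows x_n, n \<rightarrow> +\<infinity>
  (its forward half is at finite Hausdorff distance from the forward half of the
  concatenation).  g^+ is the class of the forward ray t \<mapsto> c t,
  g^- the class of the backward ray t \<mapsto> c (-t).\<close>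
definition pole_data :: "('a::metric_space \<Rightarrow> 'a) \<Rightarrow> (real \<Rightarrow> 'a) \<Rightarrow> bool" where
  "pole_data g c \<longleftrightarrow> (\<exists>x0 \<sigma> N M. morse_concat g x0 \<sigma> N \<and>
     biinf_geodesic c \<and> N_morse_on M UNIV c \<and>
     fin_hausdorff (range c) (range (concat_path g x0 \<sigma>)) \<and>
     fin_hausdorff (c ` {0..}) (concat_path g x0 \<sigma> ` {0..}))"

definition pole_plus :: "('a::metric_space \<Rightarrow> 'a) \<Rightarrow> (real \<Rightarrow> 'a) set \<Rightarrow> bool" where
  "pole_plus g p \<longleftrightarrow> (\<exists>c. pole_data g c \<and> p = morse_class c)"

definition pole_minus :: "('a::metric_space \<Rightarrow> 'a) \<Rightarrow> (real \<Rightarrow> 'a) set \<Rightarrow> bool" where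
  "pole_minus g p \<longleftrightarrow> (\<exists>c. pole_data g c \<and> p = morse_class (\<lambda>t. c (- t)))"

end

theory Submission
  imports Defs "HOL-Library.Diagonal_Subsequence" "HOL-Library.Nat_Bijection"
begin

lemma coarse_ivt:
  fixes f :: "real \<Rightarrow> real"
  assumes ab: "a \<le> b" and d: "\<delta> > 0"
    and C: "\<And>s s'. s \<in> {a..b} \<Longrightarrow> s' \<in> {a..b} \<Longrightarrow> \<bar>s - s'\<bar> \<le> \<delta> \<Longrightarrow> \<bar>f s - f s'\<bar> \<le> K"
    and fa: "f a \<le> v" and fb: "v \<le> f b"
  shows "\<exists>s\<in>{a..b}. \<bar>f s - v\<bar> \<le> K"
proof -
  have K0: "K \<ge> 0" using C[of a a] ab d by auto
  define S where "S = {s\<in>{a..b}. f s \<le> v}"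
  have aS: "a \<in> S" using ab fa by (auto simp: S_def)
  have bdd: "bdd_above S" unfolding S_def by (rule bdd_aboveI[of _ b]) auto
  define t where "t = Sup S"
  have at: "a \<le> t" unfolding t_def using aS bdd by (rule cSup_upper)
  have tb: "t \<le> b" unfolding t_def using aS by (intro cSup_least) (auto simp: S_def)
  show ?thesis
  proof (cases "f t \<le> v")
    case True
    show ?thesis
    proof (cases "t = b")
      case True
      then show ?thesis using \<open>f t \<le> v\<close> fb K0 ab by (intro bexI[of _ b]) auto
    next
      case False
      define s' where "s' = min b (t + \<delta>)"
      have "s' > t" using False tb d by (auto simp: s'_def)
      have "s' \<notin> S"
      proof
        assume "s' \<in> S"
        then have "s' \<le> t" unfolding t_def using bdd by (rule cSup_upper)
        with \<open>s' > t\<close> show False by simp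
      qed
      moreover have s'ab: "s' \<in> {a..b}" using at \<open>s' > t\<close> by (auto simp: s'_def)
      ultimately have "f s' > v" by (auto simp: S_def)
      moreover have "\<bar>f t - f s'\<bar> \<le> K" using C[of t s'] at tb s'ab \<open>s' > t\<close> d
        by (auto simp: s'_def)
      ultimately show ?thesis using True at tb by (intro bexI[of _ t]) auto
    qed
  next
    case False
    have "\<exists>s\<in>S. t - \<delta> < s" unfolding t_def
      using aS d by (intro less_cSupD) (auto simp: t_def[symmetric])
    then obtain s where sS: "s \<in> S" and s: "t - \<delta> < s" by blast
    have "s \<le> t" unfolding t_def using sS bdd by (rule cSup_upper)
    have "\<bar>f s - f t\<bar> \<le> K" using C[of s t] sS at tb s \<open>s \<le> t\<close> by (auto simp: S_def)
    then show ?thesis using sS False by (intro bexI[of _ s]) (auto simp: S_def)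
  qed
qed

lemma coarse_ivt':
  fixes f :: "real \<Rightarrow> real"
  assumes ab: "a \<le> b" and d: "\<delta> > 0"
    and C: "\<And>s s'. s \<in> {a..b} \<Longrightarrow> s' \<in> {a..b} \<Longrightarrow> \<bar>s - s'\<bar> \<le> \<delta> \<Longrightarrow> \<bar>f s - f s'\<bar> \<le> K"
    and fa: "v \<le> f a" and fb: "f b \<le> v"
  shows "\<exists>s\<in>{a..b}. \<bar>f s - v\<bar> \<le> K"
proof -
  have "\<exists>s\<in>{a..b}. \<bar>(- f s) - (- v)\<bar> \<le> K"
    by (rule coarse_ivt[OF ab d, of "\<lambda>s. - f s"]) (use C fa fb in \<open>auto simp: abs_minus_commute\<close>)
  then show ?thesis by (auto simp: abs_minus_commute)
qed

lemma div_lam_le: "(1::real) \<le> lam \<Longrightarrow> 0 \<le> x \<Longrightarrow> x / lam \<le> x"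
  by (simp add: divide_le_eq mult_le_cancel_left1 order_trans[of _ "x"])

lemma quasi_ext:
  assumes q: "quasi_geodesic_on {a..b} lam eps q" and ab: "a \<le> b"
    and du: "dist (q a) pu \<le> K" and dv: "dist (q b) pv \<le> K"
  defines "Q \<equiv> (\<lambda>s. if s < a then pu else if s > b then pv else q s)"
  shows "quasi_geodesic_on {a-1..b+1} lam (eps + 2*K + 2) Q"
proof -
  have lam: "lam \<ge> 1" and eps: "eps \<ge> 0" using q by (auto simp: quasi_geodesic_on_def)
  have K0: "K \<ge> 0" using du by (meson zero_le_dist order_trans)
  have qq: "\<And>s t. s \<in> {a..b} \<Longrightarrow> t \<in> {a..b} \<Longrightarrow> \<bar>s - t\<bar> / lam - eps \<le> dist (q s) (q t) \<and>
                    dist (q s) (q t) \<le> lam * \<bar>s - t\<bar> + eps"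
    using q by (auto simp: quasi_geodesic_on_def)
  define E where "E = eps + 2*K + 2"
  have dl: "\<And>x y. x \<le> y \<Longrightarrow> y / lam \<le> x / lam + (y - x) / lam"
    by (simp add: diff_divide_distrib)
  have dl1: "\<And>x. 0 \<le> x \<Longrightarrow> x \<le> 1 \<Longrightarrow> x / lam \<le> 1"
    using lam div_lam_le by fastforce
  have dl2: "\<And>x. 0 \<le> x \<Longrightarrow> x \<le> lam * x"
    using lam by (simp add: mult_le_cancel_right1)
  have key: "\<bar>s - t\<bar> / lam - E \<le> dist (Q s) (Q t) \<and> dist (Q s) (Q t) \<le> lam * \<bar>s - t\<bar> + E"
    if s: "s \<in> {a-1..b+1}" and t: "t \<in> {a-1..b+1}" and st: "s \<le> t" for s t
  proof -
    have abs: "\<bar>s - t\<bar> = t - s" using st by simp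
    consider "s < a" "t < a" | "s < a" "t \<in> {a..b}" | "s < a" "t > b"
      | "s \<in> {a..b}" "t \<in> {a..b}" | "s \<in> {a..b}" "t > b" | "s > b" "t > b"
      using st by force
    then show ?thesis
    proof cases
      case 1
      then have "(t - s) / lam \<le> 1" using s st by (intro dl1) auto
      moreover have "dist (Q s) (Q t) = 0" using 1 by (simp add: Q_def)
      ultimately show ?thesis using abs K0 eps lam unfolding E_def
        by (smt (verit) mult_nonneg_nonneg)
    next
      case 2
      have a: "\<bar>a - t\<bar> / lam - eps \<le> dist (q a) (q t) \<and> dist (q a) (q t) \<le> lam * \<bar>a - t\<bar> + eps"
        using qq[of a t] 2 ab by auto
      have t1: "dist (q a) (q t) - K \<le> dist pu (q t)" "dist pu (q t) \<le> K + dist (q a) (q t)"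
        using dist_triangle[of "q a" "q t" pu] dist_triangle[of pu "q t" "q a"] du
        by (auto simp: dist_commute)
      have "(t - s) / lam \<le> (t - a)/lam + (a - s)/lam" using dl[of a t] dl[of s t] 2
        by (simp add: diff_divide_distrib)
      moreover have "(a - s)/lam \<le> 1" using 2 s by (intro dl1) auto
      moreover have "lam * (t - a) \<le> lam * (t - s)" using 2 lam by (intro mult_left_mono) auto
      ultimately show ?thesis using 2 a t1 abs K0 by (auto simp: Q_def E_def)
    next
      case 3
      have a: "\<bar>a - b\<bar> / lam - eps \<le> dist (q a) (q b) \<and> dist (q a) (q b) \<le> lam * \<bar>a - b\<bar> + eps"
        using qq[of a b] ab by auto
      have t1: "dist (q a) (q b) - 2*K \<le> dist pu pv" "dist pu pv \<le> 2*K + dist (q a) (q b)"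
        using dist_triangle[of "q a" "q b" pu] dist_triangle[of pu "q b" pv] 
          dist_triangle[of pu pv "q a"] dist_triangle[of "q a" pv "q b"] du dv
        by (auto simp: dist_commute)
      have "(t - s) / lam \<le> (b - a)/lam + (a - s)/lam + (t - b)/lam"
        using 3 by (simp add: diff_divide_distrib)
      moreover have "(a - s)/lam \<le> 1" using 3 s by (intro dl1) auto
      moreover have "(t - b)/lam \<le> 1" using 3 t by (intro dl1) auto
      moreover have "lam * (b - a) \<le> lam * (t - s)" using 3 lam by (intro mult_left_mono) auto
      ultimately show ?thesis using 3 a t1 abs K0 ab by (auto simp: Q_def E_def)
    next
      case 4
      then show ?thesis using qq[of s t] K0 by (auto simp: Q_def E_def)
    next
      case 5
      have a: "\<bar>s - b\<bar> / lam - eps \<le> dist (q s) (q b) \<and> dist (q s) (q b) \<le> lam * \<bar>s - b\<bar> + eps"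
        using qq[of s b] 5 ab by auto
      have t1: "dist (q s) (q b) - K \<le> dist (q s) pv" "dist (q s) pv \<le> K + dist (q s) (q b)"
        using dist_triangle[of "q s" "q b" pv] dist_triangle[of "q s" pv "q b"] dv
        by (auto simp: dist_commute)
      have "(t - s) / lam \<le> (b - s)/lam + (t - b)/lam"
        using 5 by (simp add: diff_divide_distrib)
      moreover have "(t - b)/lam \<le> 1" using 5 t by (intro dl1) auto
      moreover have "lam * (b - s) \<le> lam * (t - s)" using 5 lam by (intro mult_left_mono) auto
      ultimately show ?thesis using 5 a t1 abs K0 by (auto simp: Q_def E_def)
    next
      case 6
      then have "(t - s) / lam \<le> 1" using t st by (intro dl1) auto
      moreover have "dist (Q s) (Q t) = 0" using 6 ab by (simp add: Q_def)
      ultimately show ?thesis using abs K0 eps lam unfolding E_def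
        by (smt (verit) mult_nonneg_nonneg)
    qed
  qed
  have all: "\<forall>s\<in>{a-1..b+1}. \<forall>t\<in>{a-1..b+1}. \<bar>s - t\<bar> / lam - E \<le> dist (Q s) (Q t) \<and> dist (Q s) (Q t) \<le> lam * \<bar>s - t\<bar> + E"
  proof (intro ballI)
    fix s t assume s: "s \<in> {a-1..b+1}" and t: "t \<in> {a-1..b+1}"
    show "\<bar>s - t\<bar> / lam - E \<le> dist (Q s) (Q t) \<and> dist (Q s) (Q t) \<le> lam * \<bar>s - t\<bar> + E"
    proof (cases "s \<le> t")
      case True then show ?thesis using key[OF s t] by simp
    next
      case False then show ?thesis using key[OF t s] by (simp add: dist_commute abs_minus_commute)
    qed
  qed
  show ?thesis unfolding quasi_geodesic_on_def using all lam eps K0 by (simp add: E_def)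
qed

lemma morse_ext:
  assumes M: "N_morse_on M UNIV c"
    and q: "quasi_geodesic_on {a..b} lam eps q" and ab: "a \<le> b"
    and du: "dist (q a) (c u) \<le> K" and dv: "dist (q b) (c v) \<le> K"
    and t: "t \<in> {a..b}"
  shows "infdist (q t) (range c) \<le> M lam (eps + 2*K + 2)"
proof -
  define Q where "Q = (\<lambda>s. if s < a then c u else if s > b then c v else q s)"
  have Qq: "quasi_geodesic_on {a-1..b+1} lam (eps + 2*K + 2) Q"
    unfolding Q_def by (rule quasi_ext[OF q ab du dv])
  have H: "\<And>lam eps q a b t. a \<le> b \<Longrightarrow> quasi_geodesic_on {a..b} lam eps q \<Longrightarrow> q a \<in> range c
      \<Longrightarrow> q b \<in> range c \<Longrightarrow> t \<in> {a..b} \<Longrightarrow> infdist (q t) (range c) \<le> M lam eps"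
    using M unfolding N_morse_on_def by blast
  have "infdist (Q t) (range c) \<le> M lam (eps + 2*K + 2)"
    by (rule H[OF _ Qq]) (use t ab in \<open>auto simp: Q_def\<close>)
  then show ?thesis using t by (auto simp: Q_def)
qed

lemma infdist_ex: "A \<noteq> {} \<Longrightarrow> infdist x A < e \<Longrightarrow> \<exists>a\<in>A. dist x a < e"
  by (simp add: infdist_notempty cINF_less_iff)

lemma infdist_ex_range: "infdist x (range c) \<le> R \<Longrightarrow> \<exists>w. dist x (c w) \<le> R + 1"
proof -
  assume "infdist x (range c) \<le> R"
  then have "\<exists>a\<in>range c. dist x a < R + 1" by (intro infdist_ex) auto
  then show ?thesis by (auto intro: less_imp_le)
qed

definition OSB :: "real \<Rightarrow> real \<Rightarrow> real \<Rightarrow> real" where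
  "OSB lam eps R = lam*lam*(2*R + 2*(lam + eps + 2*R) + eps) + eps + R + (lam + eps + 2*R)"

lemma one_sided:
  assumes c: "biinf_geodesic c"
    and q: "quasi_geodesic_on {a..b} lam eps q" and ab: "a \<le> b"
    and phi: "\<And>t. t \<in> {a..b} \<Longrightarrow> dist (q t) (c (\<phi> t)) \<le> R"
    and va: "\<phi> a \<le> v" and vb: "\<phi> b \<le> v"
    and t: "t \<in> {a..b}" and vt: "v < \<phi> t"
  shows "dist (q t) (c v) \<le> OSB lam eps R"
proof -
  have lam: "lam \<ge> 1" and eps: "eps \<ge> 0" using q by (auto simp: quasi_geodesic_on_def)
  have qq: "\<And>s t. s \<in> {a..b} \<Longrightarrow> t \<in> {a..b} \<Longrightarrow> \<bar>s - t\<bar> / lam - eps \<le> dist (q s) (q t) \<and>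
                    dist (q s) (q t) \<le> lam * \<bar>s - t\<bar> + eps"
    using q by (auto simp: quasi_geodesic_on_def)
  have cd: "\<And>x y. dist (c x) (c y) = \<bar>x - y\<bar>" using c by (simp add: biinf_geodesic_def)
  define J where "J = lam + eps + 2*R"
  have phid: "\<bar>\<phi> s - \<phi> s'\<bar> \<le> dist (q s) (q s') + 2*R" if "s \<in> {a..b}" "s' \<in> {a..b}" for s s'
  proof -
    have "dist (c (\<phi> s)) (c (\<phi> s')) \<le> dist (c (\<phi> s)) (q s) + dist (q s) (q s') + dist (q s') (c (\<phi> s'))"
      using dist_triangle[of "c (\<phi> s)" "c (\<phi> s')" "q s"] dist_triangle[of "q s" "c (\<phi> s')" "q s'"] by linarith
    then show ?thesis using phi[OF that(1)] phi[OF that(2)] cd by (simp add: dist_commute)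
  qed
  have C: "\<bar>\<phi> s - \<phi> s'\<bar> \<le> J" if "s \<in> {a..b}" "s' \<in> {a..b}" "\<bar>s - s'\<bar> \<le> 1" for s s'
  proof -
    have "lam * \<bar>s - s'\<bar> \<le> lam * 1" using that lam by (intro mult_left_mono) auto
    then show ?thesis using phid[OF that(1,2)] qq[OF that(1,2)] by (simp add: J_def)
  qed
  obtain t1 where t1: "t1 \<in> {a..t}" "\<bar>\<phi> t1 - v\<bar> \<le> J"
    using coarse_ivt[of a t 1 \<phi> J v] t C va vt by auto
  obtain t2 where t2: "t2 \<in> {t..b}" "\<bar>\<phi> t2 - v\<bar> \<le> J"
    using coarse_ivt'[of t b 1 \<phi> J v] t C vb vt by auto
  have t1ab: "t1 \<in> {a..b}" and t2ab: "t2 \<in> {a..b}" using t1 t2 t by auto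
  have "dist (q t1) (q t2) \<le> dist (q t1) (c (\<phi> t1)) + dist (c (\<phi> t1)) (c (\<phi> t2)) + dist (c (\<phi> t2)) (q t2)"
    using dist_triangle[of "q t1" "q t2" "c (\<phi> t1)"] dist_triangle[of "c (\<phi> t1)" "q t2" "c (\<phi> t2)"] by linarith
  also have "\<dots> \<le> R + 2*J + R" using phi[OF t1ab] phi[OF t2ab] cd[of "\<phi> t1" "\<phi> t2"] t1 t2
    by (simp add: dist_commute)
  finally have d12: "dist (q t1) (q t2) \<le> 2*R + 2*J" by simp
  have "(t2 - t1) / lam - eps \<le> 2*R + 2*J" using qq[OF t1ab t2ab] d12 t1 t2 by auto
  then have "t2 - t1 \<le> lam * (2*R + 2*J + eps)" using lam by (simp add: divide_le_eq algebra_simps)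
  then have "t - t1 \<le> lam * (2*R + 2*J + eps)" using t1 t2 by auto
  then have "lam * (t - t1) \<le> lam * (lam * (2*R + 2*J + eps))" using lam by (intro mult_left_mono) auto
  then have "dist (q t) (q t1) \<le> lam * lam * (2*R + 2*J + eps) + eps"
    using qq[OF t t1ab] t1 by (auto simp: mult.assoc)
  moreover have "dist (q t) (c v) \<le> dist (q t) (q t1) + dist (q t1) (c (\<phi> t1)) + dist (c (\<phi> t1)) (c v)"
    using dist_triangle[of "q t" "c v" "q t1"] dist_triangle[of "q t1" "c v" "c (\<phi> t1)"] by linarith
  ultimately show ?thesis using phi[OF t1ab] cd[of "\<phi> t1" v] t1 unfolding OSB_def J_def by linarith
qed

lemma one_sided':
  assumes c: "biinf_geodesic c"
    and q: "quasi_geodesic_on {a..b} lam eps q" and ab: "a \<le> b"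
    and phi: "\<And>t. t \<in> {a..b} \<Longrightarrow> dist (q t) (c (\<phi> t)) \<le> R"
    and va: "v \<le> \<phi> a" and vb: "v \<le> \<phi> b"
    and t: "t \<in> {a..b}" and vt: "\<phi> t < v"
  shows "dist (q t) (c v) \<le> OSB lam eps R"
proof -
  have c': "biinf_geodesic (\<lambda>x. c (- x))" using c by (simp add: biinf_geodesic_def abs_minus_commute)
  have "dist (q t) ((\<lambda>x. c (- x)) (- v)) \<le> OSB lam eps R"
    by (rule one_sided[OF c' q ab, of "\<lambda>t. - \<phi> t"]) (use phi va vb t vt in auto)
  then show ?thesis by simp
qed

definition NT :: "(real \<Rightarrow> real \<Rightarrow> real) \<Rightarrow> real \<Rightarrow> real \<Rightarrow> real \<Rightarrow> real \<Rightarrow> real \<Rightarrow> real" where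
  "NT M K R0 K2 lam eps = max 0 (OSB lam eps (M lam (eps + 2*K + 2) + 1)
       + 2 * (M lam (eps + 2*K + 2) + 1) + R0 + K + K2)"

lemma OSB_nonneg: "lam \<ge> 1 \<Longrightarrow> eps \<ge> 0 \<Longrightarrow> R \<ge> 0 \<Longrightarrow> OSB lam eps R \<ge> 0"
  unfolding OSB_def by (intro add_nonneg_nonneg mult_nonneg_nonneg) auto

lemma morse_core:
  assumes c: "biinf_geodesic c" and M: "N_morse_on M UNIV c"
    and q: "quasi_geodesic_on {a..b} lam eps q" and ab: "a \<le> b"
    and du: "dist (q a) (c pu) \<le> K" and dv: "dist (q b) (c pv) \<le> K"
    and pu: "pu \<in> {Pl - Rw..Ph + Rw}" and pv: "pv \<in> {Pl - Rw..Ph + Rw}"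
    and P: "Pl \<le> Ph" and Rw: "Rw \<ge> 0"
    and S: "\<And>w. w \<in> {Pl..Ph} \<Longrightarrow> infdist (c w) S \<le> Ks"
    and t: "t \<in> {a..b}"
  shows "infdist (q t) S \<le> NT M K Rw Ks lam eps"
proof -
  have lam: "lam \<ge> 1" and eps: "eps \<ge> 0" using q by (auto simp: quasi_geodesic_on_def)
  have K0: "K \<ge> 0" using du by (meson zero_le_dist order_trans)
  have cd: "\<And>x y. dist (c x) (c y) = \<bar>x - y\<bar>" using c by (simp add: biinf_geodesic_def)
  define R where "R = M lam (eps + 2*K + 2) + 1"
  have RR1: "R \<ge> 1" using M unfolding R_def N_morse_on_def morse_gauge_def by auto
  have "\<forall>s\<in>{a..b}. \<exists>w. dist (q s) (c w) \<le> R"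
  proof
    fix s assume s: "s \<in> {a..b}"
    have "infdist (q s) (range c) \<le> M lam (eps + 2*K + 2)"
      by (rule morse_ext[OF M q ab du dv s])
    then show "\<exists>w. dist (q s) (c w) \<le> R" unfolding R_def by (rule infdist_ex_range)
  qed
  then obtain \<phi> where phi: "\<And>s. s \<in> {a..b} \<Longrightarrow> dist (q s) (c (\<phi> s)) \<le> R" by metis
  have aab: "a \<in> {a..b}" and bab: "b \<in> {a..b}" using ab by auto
  have pa: "\<bar>\<phi> a - pu\<bar> \<le> R + K"
    using phi[OF aab] du cd[of "\<phi> a" pu] dist_triangle[of "c (\<phi> a)" "c pu" "q a"]
    by (simp add: dist_commute)
  have pb: "\<bar>\<phi> b - pv\<bar> \<le> R + K"
    using phi[OF bab] dv cd[of "\<phi> b" pv] dist_triangle[of "c (\<phi> b)" "c pv" "q b"]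
    by (simp add: dist_commute)
  define lo where "lo = Pl - Rw - R - K"
  define hi where "hi = Ph + Rw + R + K"
  have OS0: "OSB lam eps R \<ge> 0" using OSB_nonneg lam eps RR1 by auto
  have ct: "infdist (c w) S \<le> Rw + R + K + Ks" if "w \<in> {lo..hi}" for w
  proof -
    define w' where "w' = max Pl (min Ph w)"
    have "w' \<in> {Pl..Ph}" using P by (auto simp: w'_def)
    then have "infdist (c w') S \<le> Ks" by (rule S)
    moreover have "dist (c w) (c w') \<le> Rw + R + K" unfolding cd w'_def using that P Rw RR1 K0
      by (auto simp: lo_def hi_def max_def min_def abs_if)
    ultimately show ?thesis using infdist_triangle[of "c w" S "c w'"] by linarith
  qed
  have main: "infdist (q t) S \<le> OSB lam eps R + 2 * R + Rw + K + Ks"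
  proof (cases "\<phi> t > hi")
    case True
    have "dist (q t) (c hi) \<le> OSB lam eps R"
      by (rule one_sided[OF c q ab phi _ _ t True]) (use pa pb pu pv in \<open>auto simp: hi_def\<close>)
    moreover have "infdist (c hi) S \<le> Rw + R + K + Ks" using P Rw K0 RR1 by (intro ct) (auto simp: lo_def hi_def)
    ultimately show ?thesis using infdist_triangle[of "q t" S "c hi"] RR1 by linarith
  next
    case False
    show ?thesis
    proof (cases "\<phi> t < lo")
      case True
      have "dist (q t) (c lo) \<le> OSB lam eps R"
        by (rule one_sided'[OF c q ab phi _ _ t True]) (use pa pb pu pv in \<open>auto simp: lo_def\<close>)
      moreover have "infdist (c lo) S \<le> Rw + R + K + Ks" using P Rw K0 RR1 by (intro ct) (auto simp: lo_def hi_def)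
      ultimately show ?thesis using infdist_triangle[of "q t" S "c lo"] RR1 by linarith
    next
      case False2: False
      have "infdist (c (\<phi> t)) S \<le> Rw + R + K + Ks" using False False2 by (intro ct) auto
      then show ?thesis using infdist_triangle[of "q t" S "c (\<phi> t)"] phi[OF t] OS0 by linarith
    qed
  qed
  then show ?thesis unfolding NT_def R_def by linarith
qed

lemma NT_gauge: "morse_gauge (NT M K R0 K2)"
  by (simp add: morse_gauge_def NT_def)

lemma halfray_morse:
  assumes c: "biinf_geodesic c" and M: "N_morse_on M UNIV c"
  shows "morse_ray c"
proof -
  have "N_morse_on (NT M 0 0 0) {0..} c"
    unfolding N_morse_on_def
  proof (intro conjI NT_gauge allI impI ballI)
    fix lam eps q a b t
    assume ab: "a \<le> b" and q: "quasi_geodesic_on {a..b} lam eps q"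
      and qa: "q a \<in> c ` {0..}" and qb: "q b \<in> c ` {0..}" and t: "t \<in> {a..b}"
    obtain u where u: "u \<ge> 0" "q a = c u" using qa by auto
    obtain v where v: "v \<ge> 0" "q b = c v" using qb by auto
    show "infdist (q t) (c ` {0..}) \<le> NT M 0 0 0 lam eps"
      apply (rule morse_core[OF c M q ab, where pu=u and pv=v and K=0 and Pl=0 and Ph="max u v" and Rw=0 and Ks=0])
      using u v t by auto
  qed
  then show ?thesis using c unfolding morse_ray_def geodesic_ray_def biinf_geodesic_def by blast
qed

definition SK1 :: "(real \<Rightarrow> real \<Rightarrow> real) \<Rightarrow> real \<Rightarrow> real \<Rightarrow> real" where
  "SK1 M A D = M 1 (2 * max A D + 2) + 1"
definition SR0 :: "(real \<Rightarrow> real \<Rightarrow> real) \<Rightarrow> real \<Rightarrow> real \<Rightarrow> real" where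
  "SR0 M A D = A + D + SK1 M A D"
definition SK2 :: "(real \<Rightarrow> real \<Rightarrow> real) \<Rightarrow> real \<Rightarrow> real \<Rightarrow> real" where
  "SK2 M A D = A + D + 3 * SK1 M A D + 1"

lemma geod_seg_quasi:
  assumes "geodesic_seg \<sigma> x y"
  shows "quasi_geodesic_on {0..dist x y} 1 0 \<sigma>"
  using assms unfolding geodesic_seg_def quasi_geodesic_on_def by auto

lemma seg_lemma:
  assumes c: "biinf_geodesic c" and M: "N_morse_on M UNIV c"
    and sg: "geodesic_seg \<sigma> b y" and T: "T \<ge> 0" and yD: "dist y (c T) \<le> D"
    and A: "dist b (c 0) \<le> A"
  shows "N_morse_on (NT M (SK1 M A D) (SR0 M A D) (SK2 M A D)) {0..dist b y} \<sigma>"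
    and "\<forall>s\<in>{0..dist b y}. infdist (\<sigma> s) (c ` {0..}) \<le> SK1 M A D + SR0 M A D"
    and "dist b y \<ge> T - A - D"
proof -
  define L where "L = dist b y"
  define K1 where "K1 = SK1 M A D"
  define R0 where "R0 = SR0 M A D"
  define K2 where "K2 = SK2 M A D"
  have cd: "\<And>x y. dist (c x) (c y) = \<bar>x - y\<bar>" using c by (simp add: biinf_geodesic_def)
  have s0: "\<sigma> 0 = b" and sL: "\<sigma> L = y" and sd: "\<And>s t. s \<in> {0..L} \<Longrightarrow> t \<in> {0..L} \<Longrightarrow> dist (\<sigma> s) (\<sigma> t) = \<bar>s - t\<bar>"
    using sg by (auto simp: geodesic_seg_def L_def)
  have L0: "L \<ge> 0" by (simp add: L_def)
  have q: "quasi_geodesic_on {0..L} 1 0 \<sigma>" using geod_seg_quasi[OF sg] by (simp add: L_def)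
  have A0: "A \<ge> 0" using A by (meson zero_le_dist order_trans)
  have D0: "D \<ge> 0" using yD by (meson zero_le_dist order_trans)
  have Mg: "\<And>l e. M l e \<ge> 0" using M by (auto simp: N_morse_on_def morse_gauge_def)
  have K1pos: "K1 \<ge> 1" using Mg by (simp add: K1_def SK1_def)
  have Lb: "L \<le> A + T + D"
  proof -
    have "L \<le> dist b (c 0) + dist (c 0) (c T) + dist (c T) y"
      unfolding L_def using dist_triangle[of b y "c 0"] dist_triangle[of "c 0" y "c T"] by linarith
    then show ?thesis using A yD cd[of 0 T] T by (simp add: dist_commute)
  qed
  have Lb2: "L \<ge> T - A - D"
  proof -
    have "dist (c 0) (c T) \<le> dist (c 0) b + dist b y + dist y (c T)"
      using dist_triangle[of "c 0" "c T" b] dist_triangle[of b "c T" y] by linarith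
    then show ?thesis using A yD cd[of 0 T] T by (simp add: dist_commute L_def)
  qed
  then show "dist b y \<ge> T - A - D" by (simp add: L_def)
  have near: "\<exists>w. dist (\<sigma> s) (c w) \<le> K1" if s: "s \<in> {0..L}" for s
  proof -
    have "infdist (\<sigma> s) (range c) \<le> M 1 (0 + 2 * max A D + 2)"
      by (rule morse_ext[OF M q L0 _ _ s, where u=0 and v=T and K="max A D"]) (use A yD s0 sL in auto)
    then show ?thesis unfolding K1_def SK1_def by (intro infdist_ex_range) simp
  qed
  have window: "w \<in> {- R0..T + R0}" if s: "s \<in> {0..L}" and w: "dist (\<sigma> s) (c w) \<le> K1" for s w
  proof -
    have e1: "dist b (\<sigma> s) = s" using sd[of 0 s] s s0 L0 by auto
    have e2: "dist (\<sigma> s) y = L - s" using sd[of s L] s sL L0 by auto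
    have "\<bar>w\<bar> \<le> A + s + K1"
    proof -
      have "dist (c 0) (c w) \<le> dist (c 0) b + dist b (\<sigma> s) + dist (\<sigma> s) (c w)"
        using dist_triangle[of "c 0" "c w" b] dist_triangle[of b "c w" "\<sigma> s"] by linarith
      then show ?thesis using A e1 w cd[of 0 w] by (simp add: dist_commute)
    qed
    moreover have "\<bar>w - T\<bar> \<le> D + (L - s) + K1"
    proof -
      have "dist (c w) (c T) \<le> dist (c w) (\<sigma> s) + dist (\<sigma> s) y + dist y (c T)"
        using dist_triangle[of "c w" "c T" "\<sigma> s"] dist_triangle[of "\<sigma> s" "c T" y] by linarith
      then show ?thesis using yD e2 w cd[of w T] by (simp add: dist_commute)
    qed
    ultimately show ?thesis using Lb T unfolding R0_def SR0_def K1_def[symmetric] by (auto simp: abs_if split: if_splits)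
  qed
  have shadow: "infdist (c w) (\<sigma> ` {0..L}) \<le> K2" if w: "w \<in> {0..T}" for w
  proof -
    obtain \<phi> where phi: "\<And>s. s \<in> {0..L} \<Longrightarrow> dist (\<sigma> s) (c (\<phi> s)) \<le> K1"
      using near by metis
    have z: "0 \<in> {0..L}" and l: "L \<in> {0..L}" using L0 by auto
    have p0: "\<phi> 0 \<le> A + K1"
    proof -
      have "dist (c 0) (c (\<phi> 0)) \<le> dist (c 0) b + dist b (c (\<phi> 0))"
        by (rule dist_triangle)
      then show ?thesis using A phi[OF z] s0 cd[of 0 "\<phi> 0"] by (simp add: dist_commute)
    qed
    have pL: "\<phi> L \<ge> T - D - K1"
    proof -
      have "dist (c T) (c (\<phi> L)) \<le> dist (c T) y + dist y (c (\<phi> L))"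
        by (rule dist_triangle)
      then show ?thesis using yD phi[OF l] sL cd[of T "\<phi> L"] by (simp add: dist_commute)
    qed
    have K2ge: "K2 \<ge> A + D + 3 * K1 + 1" by (simp add: K2_def K1_def SK2_def)
    show ?thesis
    proof (cases "w \<le> \<phi> 0")
      case True
      have "dist (c w) (\<sigma> 0) \<le> dist (c w) (c (\<phi> 0)) + dist (c (\<phi> 0)) (\<sigma> 0)" by (rule dist_triangle)
      then have "dist (c w) (\<sigma> 0) \<le> A + 2*K1" using phi[OF z] cd[of w "\<phi> 0"] True w p0
        by (simp add: dist_commute)
      then show ?thesis using infdist_le[of "\<sigma> 0" "\<sigma> ` {0..L}" "c w"] z K2ge D0 K1pos by force
    next
      case False
      show ?thesis
      proof (cases "\<phi> L \<le> w")
        case True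
        have "dist (c w) (\<sigma> L) \<le> dist (c w) (c (\<phi> L)) + dist (c (\<phi> L)) (\<sigma> L)" by (rule dist_triangle)
        then have "dist (c w) (\<sigma> L) \<le> D + 2*K1" using phi[OF l] cd[of w "\<phi> L"] True w pL
          by (simp add: dist_commute)
        then show ?thesis using infdist_le[of "\<sigma> L" "\<sigma> ` {0..L}" "c w"] l K2ge A0 K1pos by force
      next
        case False2: False
        have C: "\<bar>\<phi> s - \<phi> s'\<bar> \<le> 1 + 2*K1" if "s \<in> {0..L}" "s' \<in> {0..L}" "\<bar>s - s'\<bar> \<le> 1" for s s'
        proof -
          have "dist (c (\<phi> s)) (c (\<phi> s')) \<le> dist (c (\<phi> s)) (\<sigma> s) + dist (\<sigma> s) (\<sigma> s') + dist (\<sigma> s') (c (\<phi> s'))"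
            using dist_triangle[of "c (\<phi> s)" "c (\<phi> s')" "\<sigma> s"] dist_triangle[of "\<sigma> s" "c (\<phi> s')" "\<sigma> s'"] by linarith
          then show ?thesis using phi[OF that(1)] phi[OF that(2)] sd[OF that(1,2)] that(3) cd
            by (simp add: dist_commute)
        qed
        obtain s where s: "s \<in> {0..L}" "\<bar>\<phi> s - w\<bar> \<le> 1 + 2*K1"
          using coarse_ivt[of 0 L 1 \<phi> "1 + 2*K1" w] L0 C False False2 by auto
        have "dist (c w) (\<sigma> s) \<le> dist (c w) (c (\<phi> s)) + dist (c (\<phi> s)) (\<sigma> s)" by (rule dist_triangle)
        then have "dist (c w) (\<sigma> s) \<le> 1 + 3*K1" using phi[OF s(1)] cd[of w "\<phi> s"] s(2)
          by (simp add: dist_commute abs_minus_commute)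
        then show ?thesis using infdist_le[of "\<sigma> s" "\<sigma> ` {0..L}" "c w"] s(1) K2ge A0 D0 by force
      qed
    qed
  qed
  show "N_morse_on (NT M (SK1 M A D) (SR0 M A D) (SK2 M A D)) {0..dist b y} \<sigma>"
    unfolding N_morse_on_def L_def[symmetric] K1_def[symmetric] R0_def[symmetric] K2_def[symmetric]
  proof (intro conjI NT_gauge allI impI ballI)
    fix lam eps qq a bb t
    assume ab: "a \<le> bb" and qq: "quasi_geodesic_on {a..bb} lam eps qq"
      and qa: "qq a \<in> \<sigma> ` {0..L}" and qb: "qq bb \<in> \<sigma> ` {0..L}" and t: "t \<in> {a..bb}"
    obtain u where u: "u \<in> {0..L}" "qq a = \<sigma> u" using qa by auto
    obtain v where v: "v \<in> {0..L}" "qq bb = \<sigma> v" using qb by auto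
    obtain pu where pu: "dist (\<sigma> u) (c pu) \<le> K1" using near[OF u(1)] by blast
    obtain pv where pv: "dist (\<sigma> v) (c pv) \<le> K1" using near[OF v(1)] by blast
    have R0pos: "R0 \<ge> 0" using A0 D0 K1pos by (simp add: R0_def SR0_def K1_def)
    show "infdist (qq t) (\<sigma> ` {0..L}) \<le> NT M K1 R0 K2 lam eps"
      apply (rule morse_core[OF c M qq ab, where pu=pu and pv=pv and K=K1 and Pl=0 and Ph=T and Rw=R0 and Ks=K2])
      using u v pu pv window[OF u(1) pu] window[OF v(1) pv] T R0pos shadow t by auto
  qed
  show "\<forall>s\<in>{0..dist b y}. infdist (\<sigma> s) (c ` {0..}) \<le> SK1 M A D + SR0 M A D"
    unfolding L_def[symmetric] K1_def[symmetric] R0_def[symmetric]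
  proof
    fix s assume s: "s \<in> {0..L}"
    obtain w where w: "dist (\<sigma> s) (c w) \<le> K1" using near[OF s] by blast
    have ww: "w \<in> {- R0..T + R0}" by (rule window[OF s w])
    have R0pos: "R0 \<ge> 0" using A0 D0 K1pos by (simp add: R0_def SR0_def K1_def)
    have "dist (c w) (c (max 0 w)) \<le> R0" using ww R0pos by (simp add: cd max_def abs_if)
    then have "dist (\<sigma> s) (c (max 0 w)) \<le> K1 + R0" using w dist_triangle[of "\<sigma> s" "c (max 0 w)" "c w"] by linarith
    then show "infdist (\<sigma> s) (c ` {0..}) \<le> K1 + R0" by (rule infdist_le2[rotated]) auto
  qed
qed

lemma proper_cauchy_conv:
  fixes X :: "nat \<Rightarrow> 'a::metric_space"
  assumes p: "proper_space TYPE('a)" and C: "Cauchy X"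
  shows "\<exists>l. X \<longlonglongrightarrow> l"
proof -
  have "bounded (range X)" using C by (rule Elementary_Metric_Spaces.cauchy_imp_bounded)
  then obtain e x where sub: "range X \<subseteq> cball x e" by (auto simp: bounded_subset_cball)
  have "compact (cball x e)" using p by (simp add: proper_space_def)
  then have "complete (cball x e)" by (rule compact_imp_complete)
  then obtain l where "X \<longlonglongrightarrow> l" using sub C by (auto elim!: completeE)
  then show ?thesis by blast
qed

definition dpt :: "nat \<Rightarrow> real" where
  "dpt k = real (fst (prod_decode k)) / real (snd (prod_decode k) + 1)"

lemma dpt_nonneg: "dpt k \<ge> 0" by (simp add: dpt_def)

lemma dpt_dense:
  assumes t: "t \<ge> 0" and e: "e > 0"
  shows "\<exists>k. \<bar>t - dpt k\<bar> < e"
proof -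
  obtain m :: nat where m: "1 / e < real m" using reals_Archimedean2 by blast
  have mpos: "real m + 1 > 0" by simp
  have me: "1 / (real m + 1) < e" using m e
  proof -
    have "1 < real m * e" using m e by (simp add: divide_less_eq mult.commute)
    then have "1 < (real m + 1) * e" using e by (simp add: algebra_simps)
    then show ?thesis using mpos by (simp add: divide_less_eq mult.commute)
  qed
  define j where "j = nat \<lfloor>t * (real m + 1)\<rfloor>"
  have j1: "real j \<le> t * (real m + 1)" and j2: "t * (real m + 1) < real j + 1"
    using t by (auto simp: j_def)
  have "dpt (prod_encode (j, m)) = real j / (real m + 1)" by (simp add: dpt_def add.commute)
  moreover have "\<bar>t - real j / (real m + 1)\<bar> < 1 / (real m + 1)"
  proof -
    have h: "\<bar>t * (real m + 1) - real j\<bar> < 1" using j1 j2 by auto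
    have "t - real j / (real m + 1) = (t * (real m + 1) - real j) / (real m + 1)"
      using mpos by (simp add: field_simps)
    then have "\<bar>t - real j / (real m + 1)\<bar> = \<bar>t * (real m + 1) - real j\<bar> / (real m + 1)"
      using mpos by simp
    also have "\<dots> < 1 / (real m + 1)" using h mpos by (simp add: divide_strict_right_mono)
    finally show ?thesis .
  qed
  ultimately show ?thesis using me by (metis less_trans)
qed

lemma lip_subseq:
  fixes f :: "nat \<Rightarrow> real \<Rightarrow> 'a::metric_space"
  assumes p: "proper_space TYPE('a)"
    and lip: "\<And>n s t. s \<ge> 0 \<Longrightarrow> t \<ge> 0 \<Longrightarrow> dist (f n s) (f n t) \<le> \<bar>s - t\<bar>"
    and f0: "\<And>n. f n 0 = b"
  shows "\<exists>r \<gamma>. strict_mono r \<and> (\<forall>t\<ge>0. (\<lambda>k. f (r k) t) \<longlonglongrightarrow> \<gamma> t) \<and>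
     (\<forall>T\<ge>0. \<forall>e>0. \<forall>\<^sub>F k in sequentially. \<forall>t\<in>{0..T}. dist (f (r k) t) (\<gamma> t) < e)"
proof -
  define P where "P = (\<lambda>k (r::nat\<Rightarrow>nat). convergent (\<lambda>n. f (r n) (dpt k)))"
  interpret S: subseqs P
  proof
    fix k and s :: "nat \<Rightarrow> nat" assume "strict_mono s"
    have inb: "\<forall>n. f (s n) (dpt k) \<in> cball b (dpt k)"
      using lip[of 0 "dpt k"] dpt_nonneg[of k] f0 by (auto simp: dist_commute)
    have "compact (cball b (dpt k))" using p by (simp add: proper_space_def)
    then have "seq_compact (cball b (dpt k))" by (rule compact_imp_seq_compact)
    then obtain l r where "strict_mono r" "((\<lambda>n. f (s n) (dpt k)) \<circ> r) \<longlonglongrightarrow> l"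
      using inb by (metis seq_compactE)
    then show "\<exists>r'. strict_mono r' \<and> P k (s \<circ> r')"
      by (auto simp: P_def convergent_def o_def)
  qed
  define d where "d = S.diagseq"
  have d: "strict_mono d" unfolding d_def by (rule S.subseq_diagseq)
  have convk: "convergent (\<lambda>n. f (d n) (dpt k))" for k
  proof -
    have "P k (S.diagseq \<circ> ((+) (Suc k)))"
    proof (rule S.diagseq_holds)
      fix r s n assume "strict_mono (r::nat\<Rightarrow>nat)" "P n s"
      then show "P n (s \<circ> r)" unfolding P_def o_def convergent_def
        using LIMSEQ_subseq_LIMSEQ[of "\<lambda>i. f (s i) (dpt n)" _ r] by (auto simp: o_def)
    qed
    then obtain l where "(\<lambda>n. f (d (Suc k + n)) (dpt k)) \<longlonglongrightarrow> l"
      by (auto simp: P_def convergent_def d_def o_def)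
    then have "(\<lambda>n. f (d (n + Suc k)) (dpt k)) \<longlonglongrightarrow> l" by (simp add: add.commute)
    then show ?thesis using LIMSEQ_offset convergent_def by blast
  qed
  have cauchy: "Cauchy (\<lambda>n. f (d n) t)" if t: "t \<ge> 0" for t
  proof (rule metric_CauchyI)
    fix e :: real assume e: "e > 0"
    obtain k where k: "\<bar>t - dpt k\<bar> < e/3" using dpt_dense[OF t, of "e/3"] e by auto
    have "Cauchy (\<lambda>n. f (d n) (dpt k))" using convk[of k] by (rule convergent_Cauchy)
    then obtain N where N: "\<And>m n. m \<ge> N \<Longrightarrow> n \<ge> N \<Longrightarrow> dist (f (d m) (dpt k)) (f (d n) (dpt k)) < e/3"
      using e by (metis metric_CauchyD divide_pos_pos zero_less_numeral)
    show "\<exists>M. \<forall>m\<ge>M. \<forall>n\<ge>M. dist (f (d m) t) (f (d n) t) < e"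
    proof (intro exI allI impI)
      fix m n assume "m \<ge> N" "n \<ge> N"
      have "dist (f (d m) t) (f (d n) t) \<le> dist (f (d m) t) (f (d m) (dpt k)) + dist (f (d m) (dpt k)) (f (d n) (dpt k)) + dist (f (d n) (dpt k)) (f (d n) t)"
        using dist_triangle[of "f (d m) t" "f (d n) t" "f (d m) (dpt k)"]
          dist_triangle[of "f (d m) (dpt k)" "f (d n) t" "f (d n) (dpt k)"] by linarith
      moreover have "dist (f (d m) t) (f (d m) (dpt k)) < e/3" using lip[OF t dpt_nonneg] k by (meson le_less_trans)
      moreover have "dist (f (d n) (dpt k)) (f (d n) t) < e/3" using lip[OF dpt_nonneg t] k
        by (metis abs_minus_commute le_less_trans)
      ultimately show "dist (f (d m) t) (f (d n) t) < e" using N[OF \<open>m \<ge> N\<close> \<open>n \<ge> N\<close>] by linarith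
    qed
  qed
  define \<gamma> where "\<gamma> t = lim (\<lambda>n. f (d n) t)" for t
  have lim: "(\<lambda>n. f (d n) t) \<longlonglongrightarrow> \<gamma> t" if "t \<ge> 0" for t
    using proper_cauchy_conv[OF p cauchy[OF that]] unfolding \<gamma>_def by (metis limI)
  have glip: "dist (\<gamma> s) (\<gamma> t) \<le> \<bar>s - t\<bar>" if "s \<ge> 0" "t \<ge> 0" for s t
    using tendsto_dist[OF lim[OF that(1)] lim[OF that(2)]] lip[OF that]
    by (intro LIMSEQ_le_const2) auto
  have unif: "\<forall>\<^sub>F k in sequentially. \<forall>t\<in>{0..T}. dist (f (d k) t) (\<gamma> t) < e"
    if T: "T \<ge> 0" and e: "e > 0" for T e
  proof -
    define \<delta> where "\<delta> = e / 4"
    have dpos: "\<delta> > 0" using e by (simp add: \<delta>_def)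
    define G where "G = (\<lambda>j. real j * \<delta>) ` {0..nat \<lceil>T / \<delta>\<rceil>}"
    have "finite G" by (simp add: G_def)
    moreover have "\<forall>g\<in>G. \<forall>\<^sub>F k in sequentially. dist (f (d k) g) (\<gamma> g) < \<delta>"
    proof
      fix g assume "g \<in> G"
      then have "g \<ge> 0" using dpos by (auto simp: G_def)
      then show "\<forall>\<^sub>F k in sequentially. dist (f (d k) g) (\<gamma> g) < \<delta>"
        using lim[of g] dpos by (simp add: tendsto_iff)
    qed
    ultimately have ev: "\<forall>\<^sub>F k in sequentially. \<forall>g\<in>G. dist (f (d k) g) (\<gamma> g) < \<delta>"
      by (rule eventually_ball_finite)
    show ?thesis
    proof (rule eventually_mono[OF ev], intro ballI)
      fix k t assume H: "\<forall>g\<in>G. dist (f (d k) g) (\<gamma> g) < \<delta>" and t: "t \<in> {0..T}"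
      define j where "j = nat \<lfloor>t / \<delta>\<rfloor>"
      have tj: "real j * \<delta> \<le> t" "t < real j * \<delta> + \<delta>"
      proof -
        have "real j = of_int \<lfloor>t / \<delta>\<rfloor>" using t dpos by (simp add: j_def)
        moreover have "of_int \<lfloor>t / \<delta>\<rfloor> \<le> t / \<delta>" by (rule of_int_floor_le)
        moreover have "t / \<delta> < of_int \<lfloor>t / \<delta>\<rfloor> + 1" by (rule real_of_int_floor_add_one_gt)
        ultimately have a: "real j \<le> t / \<delta>" and b: "t / \<delta> < real j + 1" by auto
        from a show "real j * \<delta> \<le> t" using dpos by (simp add: pos_le_divide_eq)
        from b have "t < (real j + 1) * \<delta>" using dpos by (simp add: pos_divide_less_eq)
        then show "t < real j * \<delta> + \<delta>" by (simp add: algebra_simps)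
      qed
      have "j \<le> nat \<lceil>T / \<delta>\<rceil>"
      proof -
        have "t / \<delta> \<le> T / \<delta>" using t dpos by (simp add: divide_right_mono)
        then show ?thesis unfolding j_def by (meson ceiling_correct floor_le_ceiling nat_mono order_trans
             floor_mono le_of_int_ceiling)
      qed
      then have gG: "real j * \<delta> \<in> G" by (auto simp: G_def)
      have g0: "real j * \<delta> \<ge> 0" using dpos by simp
      have t0: "t \<ge> 0" using t by simp
      have "dist (f (d k) t) (\<gamma> t) \<le> dist (f (d k) t) (f (d k) (real j * \<delta>)) + dist (f (d k) (real j * \<delta>)) (\<gamma> (real j * \<delta>)) + dist (\<gamma> (real j * \<delta>)) (\<gamma> t)"
        using dist_triangle[of "f (d k) t" "\<gamma> t" "f (d k) (real j * \<delta>)"]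
          dist_triangle[of "f (d k) (real j * \<delta>)" "\<gamma> t" "\<gamma> (real j * \<delta>)"] by linarith
      moreover have "dist (f (d k) t) (f (d k) (real j * \<delta>)) \<le> \<delta>" using lip[OF t0 g0, of "d k"] tj by simp
      moreover have "dist (\<gamma> (real j * \<delta>)) (\<gamma> t) \<le> \<delta>" proof -
        have "\<bar>real j * \<delta> - t\<bar> \<le> \<delta>" using tj by (simp add: abs_le_iff)
        then show ?thesis using glip[OF g0 t0] by linarith
      qed
      moreover have "dist (f (d k) (real j * \<delta>)) (\<gamma> (real j * \<delta>)) < \<delta>" using H gG by blast
      ultimately show "dist (f (d k) t) (\<gamma> t) < e" using e unfolding \<delta>_def by linarith
    qed
  qed
  show ?thesis
    by (rule exI[of _ d], rule exI[of _ \<gamma>]) (use d lim unif in blast)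
qed

lemma infdist_ex_le: "A \<noteq> {} \<Longrightarrow> infdist x A \<le> R \<Longrightarrow> \<exists>a\<in>A. dist x a \<le> R + 1"
proof -
  assume "A \<noteq> {}" "infdist x A \<le> R"
  then have "\<exists>a\<in>A. dist x a < R + 1" by (intro infdist_ex) auto
  then show ?thesis by (auto intro: less_imp_le)
qed

lemma fh_sym: "fin_hausdorff A B \<Longrightarrow> fin_hausdorff B A"
  unfolding fin_hausdorff_def by blast

lemma fh_trans:
  assumes AB: "fin_hausdorff A B" and BC: "fin_hausdorff B C" and B: "B \<noteq> {}" and C: "C \<noteq> {}"
    and A: "A \<noteq> {}"
  shows "fin_hausdorff A C"
proof -
  obtain C1 where C1: "\<forall>x\<in>A. infdist x B \<le> C1" "\<forall>y\<in>B. infdist y A \<le> C1"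
    using AB by (auto simp: fin_hausdorff_def)
  obtain C2 where C2: "\<forall>x\<in>B. infdist x C \<le> C2" "\<forall>y\<in>C. infdist y B \<le> C2"
    using BC by (auto simp: fin_hausdorff_def)
  have 1: "infdist x C \<le> C1 + 1 + C2" if "x \<in> A" for x
  proof -
    have "infdist x B \<le> C1" using C1(1) that by blast
    then obtain y where y: "y \<in> B" "dist x y \<le> C1 + 1" using infdist_ex_le[OF B] by blast
    moreover have "infdist y C \<le> C2" using C2(1) y(1) by blast
    ultimately show ?thesis using infdist_triangle[of x C y] by linarith
  qed
  have 2: "infdist z A \<le> C2 + 1 + C1" if "z \<in> C" for z
  proof -
    have "infdist z B \<le> C2" using C2(2) that by blast
    then obtain y where y: "y \<in> B" "dist z y \<le> C2 + 1" using infdist_ex_le[OF B] by blast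
    moreover have "infdist y A \<le> C1" using C1(2) y(1) by blast
    ultimately show ?thesis using infdist_triangle[of z A y] by linarith
  qed
  show ?thesis unfolding fin_hausdorff_def
    by (rule exI[of _ "C1 + 1 + C2"]) (use 1 2 in \<open>auto simp: add.commute add.left_commute\<close>)
qed

lemma morse_class_eq:
  assumes "fin_hausdorff (\<alpha> ` {0..}) (\<beta> ` {0..})"
  shows "morse_class \<alpha> = morse_class \<beta>"
proof -
  have ne: "\<And>f::real \<Rightarrow> 'a. f ` {0..} \<noteq> {}" by auto
  show ?thesis unfolding morse_class_def
  proof (intro Collect_cong conj_cong refl iffI)
    fix \<delta> :: "real \<Rightarrow> 'a"
    assume "fin_hausdorff (\<alpha> ` {0..}) (\<delta> ` {0..})"
    then show "fin_hausdorff (\<beta> ` {0..}) (\<delta> ` {0..})"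
      by (rule fh_trans[OF fh_sym[OF assms] _ ne ne ne])
  next
    fix \<delta> :: "real \<Rightarrow> 'a"
    assume "fin_hausdorff (\<beta> ` {0..}) (\<delta> ` {0..})"
    then show "fin_hausdorff (\<alpha> ` {0..}) (\<delta> ` {0..})"
      by (rule fh_trans[OF assms _ ne ne ne])
  qed
qed

lemma ray_shadow:
  assumes c: "biinf_geodesic c" and g: "geodesic_ray \<gamma>" and g0: "\<gamma> 0 = x"
    and A: "dist x (c 0) \<le> A"
    and K: "\<And>t. t \<ge> 0 \<Longrightarrow> infdist (\<gamma> t) (c ` {0..}) \<le> K"
    and w: "w \<ge> 0"
  shows "infdist (c w) (\<gamma> ` {0..}) \<le> A + 3*K + 4"
proof -
  have cd: "\<And>x y. dist (c x) (c y) = \<bar>x - y\<bar>" using c by (simp add: biinf_geodesic_def)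
  have gd: "\<And>s t. s \<ge> 0 \<Longrightarrow> t \<ge> 0 \<Longrightarrow> dist (\<gamma> s) (\<gamma> t) = \<bar>s - t\<bar>"
    using g by (simp add: geodesic_ray_def)
  have K0: "K \<ge> 0" using K[of 0] infdist_nonneg[of "\<gamma> 0" "c ` {0..}"] by linarith
  have A0: "A \<ge> 0" using A by (meson zero_le_dist order_trans)
  have "\<forall>t. \<exists>v. t \<ge> 0 \<longrightarrow> v \<ge> 0 \<and> dist (\<gamma> t) (c v) \<le> K + 1"
  proof (intro allI)
    fix t
    show "\<exists>v. t \<ge> 0 \<longrightarrow> v \<ge> 0 \<and> dist (\<gamma> t) (c v) \<le> K + 1"
    proof (cases "t \<ge> 0")
      case True
      have ne: "c ` {0..} \<noteq> {}" by auto
      obtain a where "a \<in> c ` {0..}" "dist (\<gamma> t) a \<le> K + 1" using infdist_ex_le[OF ne K[OF True]] by blast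
      then show ?thesis by auto
    qed auto
  qed
  then obtain \<phi> where phi: "\<And>t. t \<ge> 0 \<Longrightarrow> \<phi> t \<ge> 0 \<and> dist (\<gamma> t) (c (\<phi> t)) \<le> K + 1" by metis
  have p0: "\<phi> 0 \<le> A + K + 1"
  proof -
    have "dist (c 0) (c (\<phi> 0)) \<le> dist (c 0) x + dist x (c (\<phi> 0))" by (rule dist_triangle)
    then show ?thesis using phi[of 0] A g0 cd[of 0 "\<phi> 0"] by (simp add: dist_commute)
  qed
  show ?thesis
  proof (cases "w \<le> \<phi> 0")
    case True
    have "dist (c w) (\<gamma> 0) \<le> dist (c w) (c (\<phi> 0)) + dist (c (\<phi> 0)) (\<gamma> 0)" by (rule dist_triangle)
    then have "dist (c w) (\<gamma> 0) \<le> A + 2*K + 2" using phi[of 0] cd[of w "\<phi> 0"] True w p0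
      by (simp add: dist_commute)
    moreover have "infdist (c w) (\<gamma> ` {0..}) \<le> dist (c w) (\<gamma> 0)" by (rule infdist_le) auto
    ultimately show ?thesis using K0 by linarith
  next
    case False
    define S where "S = w + A + K + 1"
    have S0: "S \<ge> 0" using w A0 K0 by (simp add: S_def)
    have pS: "\<phi> S \<ge> w"
    proof -
      have "dist x (\<gamma> S) \<le> dist x (c 0) + dist (c 0) (c (\<phi> S)) + dist (c (\<phi> S)) (\<gamma> S)"
        using dist_triangle[of x "\<gamma> S" "c 0"] dist_triangle[of "c 0" "\<gamma> S" "c (\<phi> S)"] by linarith
      moreover have "dist x (\<gamma> S) = S" using gd[of 0 S] S0 g0 by simp
      ultimately show ?thesis using A phi[OF S0] cd[of 0 "\<phi> S"] by (simp add: dist_commute S_def)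
    qed
    have C: "\<bar>\<phi> a - \<phi> b\<bar> \<le> 2*K + 3" if "a \<in> {0..S}" "b \<in> {0..S}" "\<bar>a - b\<bar> \<le> 1" for a b
    proof -
      have "dist (c (\<phi> a)) (c (\<phi> b)) \<le> dist (c (\<phi> a)) (\<gamma> a) + dist (\<gamma> a) (\<gamma> b) + dist (\<gamma> b) (c (\<phi> b))"
        using dist_triangle[of "c (\<phi> a)" "c (\<phi> b)" "\<gamma> a"] dist_triangle[of "\<gamma> a" "c (\<phi> b)" "\<gamma> b"] by linarith
      then show ?thesis using phi[of a] phi[of b] gd[of a b] that cd by (simp add: dist_commute)
    qed
    obtain t where t: "t \<in> {0..S}" "\<bar>\<phi> t - w\<bar> \<le> 2*K + 3"
      using coarse_ivt[of 0 S 1 \<phi> "2*K + 3" w] S0 C False pS by auto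
    have "dist (c w) (\<gamma> t) \<le> dist (c w) (c (\<phi> t)) + dist (c (\<phi> t)) (\<gamma> t)" by (rule dist_triangle)
    then have "dist (c w) (\<gamma> t) \<le> 3*K + 4" using phi[of t] t cd[of w "\<phi> t"]
      by (simp add: dist_commute abs_minus_commute)
    moreover have "infdist (c w) (\<gamma> ` {0..}) \<le> dist (c w) (\<gamma> t)" by (rule infdist_le) (use t in auto)
    ultimately show ?thesis using A0 by linarith
  qed
qed

lemma conv_generic:
  fixes c :: "real \<Rightarrow> 'a::metric_space" and y :: "nat \<Rightarrow> 'a" and tt :: "nat \<Rightarrow> real"
  assumes p: "proper_space TYPE('a)" and gs: "geodesic_space TYPE('a)"
    and c: "biinf_geodesic c" and M: "N_morse_on M UNIV c"
    and yD: "\<And>n. dist (y n) (c (tt n)) \<le> D" and tt0: "\<And>n. tt n \<ge> 0"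
    and tinf: "filterlim tt at_top sequentially"
  shows "converges_to_boundary y (morse_class c)"
  unfolding converges_to_boundary_def
proof (intro conjI allI)
  show "morse_class c \<in> morse_boundary"
    using halfray_morse[OF c M] by (auto simp: morse_boundary_def)
next
  fix x
  have "\<forall>n. \<exists>\<sigma>. geodesic_seg \<sigma> x (y n)" using gs by (simp add: geodesic_space_def)
  then obtain \<sigma> where sg: "\<And>n. geodesic_seg (\<sigma> n) x (y n)" by metis
  define A where "A = dist x (c 0)"
  define N where "N = NT M (SK1 M A D) (SR0 M A D) (SK2 M A D)"
  define K where "K = SK1 M A D + SR0 M A D"
  define L where "L n = dist x (y n)" for n
  have A: "dist x (c 0) \<le> A" by (simp add: A_def)
  have segM: "N_morse_on N {0..dist x (y n)} (\<sigma> n)" for n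
    unfolding N_def by (rule seg_lemma(1)[OF c M sg tt0 yD A])
  have segK: "\<And>s. s \<in> {0..L n} \<Longrightarrow> infdist (\<sigma> n s) (c ` {0..}) \<le> K" for n
    using seg_lemma(2)[OF c M sg tt0 yD A, of n] by (simp add: K_def L_def)
  have segL: "L n \<ge> tt n - A - D" for n
    using seg_lemma(3)[OF c M sg tt0 yD A, of n] by (simp add: L_def)
  have sd: "\<And>s t. s \<in> {0..L n} \<Longrightarrow> t \<in> {0..L n} \<Longrightarrow> dist (\<sigma> n s) (\<sigma> n t) = \<bar>s - t\<bar>"
    and s0: "\<sigma> n 0 = x" for n
    using sg[of n] by (auto simp: geodesic_seg_def L_def)
  have L0: "L n \<ge> 0" for n by (simp add: L_def)
  show "\<exists>N \<sigma>. (\<forall>n. geodesic_seg (\<sigma> n) x (y n) \<and> N_morse_on N {0..dist x (y n)} (\<sigma> n)) \<and>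
        (\<forall>r::nat\<Rightarrow>nat. strict_mono r \<longrightarrow>
           (\<exists>s::nat\<Rightarrow>nat. strict_mono s \<and> (\<exists>\<gamma>. geodesic_ray \<gamma> \<and> \<gamma> 0 = x \<and> morse_class \<gamma> = morse_class c \<and>
              (\<forall>T\<ge>0. \<forall>e>0. \<forall>\<^sub>F k in sequentially. \<forall>t\<in>{0..T}.
                  dist (\<sigma> (r (s k)) (min t (dist x (y (r (s k)))))) (\<gamma> t) < e))))"
  proof (intro exI[of _ N] exI[of _ \<sigma>] conjI allI impI)
    fix n show "geodesic_seg (\<sigma> n) x (y n)" by (rule sg)
    show "N_morse_on N {0..dist x (y n)} (\<sigma> n)" by (rule segM)
  next
    fix r :: "nat \<Rightarrow> nat" assume r: "strict_mono r"
    define f where "f k t = \<sigma> (r k) (min t (L (r k)))" for k t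
    have lip: "dist (f k s) (f k t) \<le> \<bar>s - t\<bar>" if "s \<ge> 0" "t \<ge> 0" for k s t
    proof -
      have "dist (f k s) (f k t) = \<bar>min s (L (r k)) - min t (L (r k))\<bar>"
        unfolding f_def using that L0[of "r k"] by (intro sd) auto
      also have "\<dots> \<le> \<bar>s - t\<bar>" by (simp add: min_def abs_if)
      finally show ?thesis .
    qed
    have f0: "f k 0 = x" for k
    proof -
      have "min 0 (L (r k)) = 0" using L0[of "r k"] by simp
      then show ?thesis unfolding f_def using s0[of "r k"] by simp
    qed
    have ex: "\<exists>r \<gamma>. strict_mono r \<and> (\<forall>t\<ge>0. (\<lambda>k. f (r k) t) \<longlonglongrightarrow> \<gamma> t) \<and>
     (\<forall>T\<ge>0. \<forall>e>0. \<forall>\<^sub>F k in sequentially. \<forall>t\<in>{0..T}. dist (f (r k) t) (\<gamma> t) < e)"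
      by (rule lip_subseq[OF p lip f0])
    then obtain s \<gamma> where sg3: "strict_mono s \<and> (\<forall>t\<ge>0. (\<lambda>k. f (s k) t) \<longlonglongrightarrow> \<gamma> t) \<and>
     (\<forall>T\<ge>0. \<forall>e>0. \<forall>\<^sub>F k in sequentially. \<forall>t\<in>{0..T}. dist (f (s k) t) (\<gamma> t) < e)"
      by (elim exE)
    have s: "strict_mono s" using sg3 by (rule conjunct1)
    have lim: "(\<lambda>k. f (s k) t) \<longlonglongrightarrow> \<gamma> t" if "t \<ge> 0" for t using sg3 that by blast
    have unif: "\<forall>T\<ge>0. \<forall>e>0. \<forall>\<^sub>F k in sequentially. \<forall>t\<in>{0..T}. dist (f (s k) t) (\<gamma> t) < e"
      using sg3 by (elim conjE)
    have Linf: "\<forall>\<^sub>F k in sequentially. Z \<le> L (r (s k))" for Z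
    proof -
      have "\<forall>\<^sub>F n in sequentially. Z + A + D \<le> tt n" using tinf by (simp add: filterlim_at_top)
      then obtain N0 where N0: "\<And>n. n \<ge> N0 \<Longrightarrow> Z + A + D \<le> tt n" by (auto simp: eventually_sequentially)
      have "Z \<le> L (r (s k))" if "k \<ge> N0" for k
      proof -
        have "k \<le> r (s k)" using strict_mono_o[OF r s] seq_suble by (metis comp_apply)
        then show ?thesis using N0[of "r (s k)"] segL[of "r (s k)"] that by linarith
      qed
      then show ?thesis by (auto simp: eventually_sequentially)
    qed
    have g0: "\<gamma> 0 = x"
    proof -
      have "(\<lambda>k. f (s k) 0) \<longlonglongrightarrow> x" using f0 by simp
      then show ?thesis using lim[of 0] LIMSEQ_unique by auto
    qed
    have gr: "geodesic_ray \<gamma>" unfolding geodesic_ray_def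
    proof (intro ballI)
      fix a b :: real assume a: "a \<in> {0..}" and b: "b \<in> {0..}"
      have t1: "(\<lambda>k. dist (f (s k) a) (f (s k) b)) \<longlonglongrightarrow> dist (\<gamma> a) (\<gamma> b)"
        using lim[of a] lim[of b] a b by (intro tendsto_dist) auto
      have ev: "\<forall>\<^sub>F k in sequentially. dist (f (s k) a) (f (s k) b) = \<bar>a - b\<bar>"
        using Linf[of "max a b"]
      proof (rule eventually_mono)
        fix k assume "max a b \<le> L (r (s k))"
        then show "dist (f (s k) a) (f (s k) b) = \<bar>a - b\<bar>" unfolding f_def using a b
          by (subst sd) auto
      qed
      have "(\<lambda>k. dist (f (s k) a) (f (s k) b)) \<longlonglongrightarrow> \<bar>a - b\<bar>"
        by (rule Lim_transform_eventually[OF tendsto_const]) (use ev in \<open>simp add: eq_commute\<close>)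
      then show "dist (\<gamma> a) (\<gamma> b) = \<bar>a - b\<bar>" using t1 LIMSEQ_unique by blast
    qed
    have h1: "infdist (\<gamma> t) (c ` {0..}) \<le> K" if t: "t \<ge> 0" for t
    proof -
      have "(\<lambda>k. infdist (f (s k) t) (c ` {0..})) \<longlonglongrightarrow> infdist (\<gamma> t) (c ` {0..})"
        by (intro tendsto_infdist lim t)
      moreover have "infdist (f (s k) t) (c ` {0..}) \<le> K" for k
        unfolding f_def using t L0[of "r (s k)"] by (intro segK) auto
      ultimately show ?thesis by (intro LIMSEQ_le_const2) auto
    qed
    have h2: "infdist (c w) (\<gamma> ` {0..}) \<le> A + 3*K + 4" if "w \<in> {0..}" for w
      using ray_shadow[OF c gr g0 A h1] that by auto
    have "fin_hausdorff (\<gamma> ` {0..}) (c ` {0..})" unfolding fin_hausdorff_def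
    proof (intro exI[of _ "max K (A + 3*K + 4)"] conjI ballI)
      fix z assume "z \<in> \<gamma> ` {0..}"
      then show "infdist z (c ` {0..}) \<le> max K (A + 3*K + 4)" using h1 by force
    next
      fix z assume "z \<in> c ` {0..}"
      then show "infdist z (\<gamma> ` {0..}) \<le> max K (A + 3*K + 4)" using h2 by force
    qed
    then have mc: "morse_class \<gamma> = morse_class c" by (rule morse_class_eq)
    show "\<exists>s. strict_mono s \<and> (\<exists>\<gamma>. geodesic_ray \<gamma> \<and> \<gamma> 0 = x \<and> morse_class \<gamma> = morse_class c \<and>
              (\<forall>T\<ge>0. \<forall>e>0. \<forall>\<^sub>F k in sequentially. \<forall>t\<in>{0..T}.
                  dist (\<sigma> (r (s k)) (min t (dist x (y (r (s k)))))) (\<gamma> t) < e))"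
      using s gr g0 mc unif unfolding f_def L_def by blast
  qed
qed

lemma iso_pow: "isometry g \<Longrightarrow> dist ((g ^^ n) a) ((g ^^ n) b) = dist a b"
  by (induction n) (auto simp: isometry_def)

lemma iso_inv: assumes "isometry g" shows "isometry (inv g)"
proof -
  have b: "bij g" and d: "\<And>x y. dist (g x) (g y) = dist x y" using assms by (auto simp: isometry_def)
  have "bij (inv g)" using b by (simp add: bij_imp_bij_inv)
  moreover have "dist (inv g x) (inv g y) = dist x y" for x y
  proof -
    have "g (inv g x) = x" "g (inv g y) = y" using b by (auto simp: bij_is_surj surj_f_inv_f)
    then show ?thesis using d[of "inv g x" "inv g y"] by simp
  qed
  ultimately show ?thesis by (simp add: isometry_def)
qed

lemma gpow_nat: "gpow g (int n) = g ^^ n" by (simp add: gpow_def)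
lemma gpow_neg: "gpow g (- int n) = inv g ^^ n" by (cases "n = 0") (auto simp: gpow_def)

lemma concat_mult:
  assumes "morse_concat g x0 \<sigma> N"
  shows "concat_path g x0 \<sigma> (dist x0 (g x0) * of_int i) = gpow g i x0"
proof -
  have L: "dist x0 (g x0) > 0" and s: "geodesic_seg (\<sigma> i) (gpow g i x0) (gpow g (i + 1) x0)"
    using assms by (auto simp: morse_concat_def)
  have "dist x0 (g x0) * of_int i / dist x0 (g x0) = of_int i" using L by simp
  then show ?thesis using s by (simp add: concat_path_def Let_def geodesic_seg_def)
qed

lemma tinf_lemma:
  fixes u :: "nat \<Rightarrow> real"
  assumes L: "L > 0" and lam: "lam > 0"
    and H: "\<And>Z. \<exists>B. \<forall>n. real n * L / lam \<ge> B \<longrightarrow> Z \<le> u n"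
  shows "filterlim u at_top sequentially"
  unfolding filterlim_at_top
proof
  fix Z
  obtain B where B: "\<And>n. real n * L / lam \<ge> B \<Longrightarrow> Z \<le> u n" using H by blast
  obtain N1 :: nat where N1: "B * lam / L < real N1" using reals_Archimedean2 by blast
  have "Z \<le> u n" if "n \<ge> N1" for n
  proof (rule B)
    have "B * lam / L \<le> real n" using N1 that by linarith
    then have "B * lam \<le> real n * L" using L by (simp add: divide_le_eq)
    then show "B \<le> real n * L / lam" using lam by (simp add: le_divide_eq)
  qed
  then show "\<forall>\<^sub>F n in sequentially. Z \<le> u n" by (auto simp: eventually_sequentially)
qed

lemma conv_generic2:
  fixes c :: "real \<Rightarrow> 'a::metric_space" and y :: "nat \<Rightarrow> 'a" and tt :: "nat \<Rightarrow> real"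
  assumes p: "proper_space TYPE('a)" and gs: "geodesic_space TYPE('a)"
    and c: "biinf_geodesic c" and M: "N_morse_on M UNIV c"
    and yD: "\<And>n. dist (y n) (c (tt n)) \<le> D"
    and tinf: "filterlim tt at_top sequentially"
  shows "converges_to_boundary y (morse_class c)"
proof -
  have "\<forall>\<^sub>F n in sequentially. 0 \<le> tt n" using tinf by (simp add: filterlim_at_top)
  then obtain N0 where N0: "\<And>n. n \<ge> N0 \<Longrightarrow> 0 \<le> tt n" by (auto simp: eventually_sequentially)
  define D' where "D' = D + (\<Sum>n<N0. \<bar>tt n\<bar>)"
  define t' where "t' n = max 0 (tt n)" for n
  have cd: "\<And>x y. dist (c x) (c y) = \<bar>x - y\<bar>" using c by (simp add: biinf_geodesic_def)
  have yD': "dist (y n) (c (t' n)) \<le> D'" for n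
  proof -
    have "dist (y n) (c (t' n)) \<le> dist (y n) (c (tt n)) + dist (c (tt n)) (c (t' n))" by (rule dist_triangle)
    moreover have "dist (c (tt n)) (c (t' n)) \<le> (\<Sum>n<N0. \<bar>tt n\<bar>)"
    proof (cases "n < N0")
      case True
      have "\<bar>tt n\<bar> \<le> (\<Sum>n<N0. \<bar>tt n\<bar>)" using True by (intro member_le_sum) auto
      moreover have "dist (c (tt n)) (c (t' n)) \<le> \<bar>tt n\<bar>" unfolding cd t'_def by (cases "tt n \<ge> 0") auto
      ultimately show ?thesis by linarith
    next
      case False
      then have "t' n = tt n" using N0[of n] by (simp add: t'_def)
      then show ?thesis by (simp add: sum_nonneg)
    qed
    ultimately show ?thesis using yD[of n] by (simp add: D'_def)
  qed
  have t0: "t' n \<ge> 0" for n by (simp add: t'_def)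
  have ti: "filterlim t' at_top sequentially"
    by (rule filterlim_at_top_mono[OF tinf]) (simp add: t'_def)
  show ?thesis by (rule conv_generic[OF p gs c M yD' t0 ti])
qed

lemma N_morse_range:
  assumes "range c' = range c" "N_morse_on M UNIV c"
  shows "N_morse_on M UNIV c'"
  using assms unfolding N_morse_on_def by simp

lemma plus_part:
  fixes g :: "'a::metric_space \<Rightarrow> 'a"
  assumes p: "proper_space TYPE('a)" and gs: "geodesic_space TYPE('a)"
    and iso: "isometry g" and pd: "pole_data g c"
  shows "converges_to_boundary (\<lambda>n. (g ^^ n) x) (morse_class c)"
proof -
  obtain x0 \<sigma> N M where mc: "morse_concat g x0 \<sigma> N" and c: "biinf_geodesic c"
    and M: "N_morse_on M UNIV c"
    and fh2: "fin_hausdorff (c ` {0..}) (concat_path g x0 \<sigma> ` {0..})"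
    using pd unfolding pole_data_def by blast
  define P where "P = concat_path g x0 \<sigma>"
  define L where "L = dist x0 (g x0)"
  have L: "L > 0" using mc by (simp add: morse_concat_def L_def)
  obtain lam eps where q: "quasi_geodesic_on UNIV lam eps P"
    using mc by (auto simp: morse_concat_def P_def)
  have lam: "lam \<ge> 1" using q by (simp add: quasi_geodesic_on_def)
  have qd: "\<And>s t. \<bar>s - t\<bar> / lam - eps \<le> dist (P s) (P t)" using q by (simp add: quasi_geodesic_on_def)
  obtain C2 where C2: "\<And>z. z \<in> P ` {0..} \<Longrightarrow> infdist z (c ` {0..}) \<le> C2"
    using fh2 unfolding fin_hausdorff_def P_def by blast
  have cd: "\<And>x y. dist (c x) (c y) = \<bar>x - y\<bar>" using c by (simp add: biinf_geodesic_def)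
  have Pn: "P (L * real n) = (g ^^ n) x0" for n
    using concat_mult[OF mc, of "int n"] by (simp add: P_def L_def gpow_nat)
  have P0: "P 0 = x0" using Pn[of 0] by simp
  have "\<forall>n. \<exists>w. w \<ge> 0 \<and> dist ((g ^^ n) x0) (c w) \<le> C2 + 1"
  proof
    fix n
    have "P (L * real n) \<in> P ` {0..}" using L by auto
    then have "infdist ((g ^^ n) x0) (c ` {0..}) \<le> C2" using C2 Pn by metis
    moreover have ne: "c ` {0..} \<noteq> {}" by auto
    ultimately obtain a where "a \<in> c ` {0..}" "dist ((g ^^ n) x0) a \<le> C2 + 1"
      using infdist_ex_le[OF ne] by blast
    then show "\<exists>w. w \<ge> 0 \<and> dist ((g ^^ n) x0) (c w) \<le> C2 + 1" by auto
  qed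
  then obtain w where w0: "\<And>n. w n \<ge> 0" and wd: "\<And>n. dist ((g ^^ n) x0) (c (w n)) \<le> C2 + 1" by metis
  have yD: "dist ((g ^^ n) x) (c (w n)) \<le> dist x x0 + (C2 + 1)" for n
    using dist_triangle[of "(g ^^ n) x" "c (w n)" "(g ^^ n) x0"] iso_pow[OF iso, of n x x0] wd[of n] by linarith
  define d0 where "d0 = dist x0 (c 0)"
  have lower: "real n * L / lam - eps - (C2 + 1) - d0 \<le> w n" for n
  proof -
    have "\<bar>L * real n - 0\<bar> / lam - eps \<le> dist (P (L * real n)) (P 0)" by (rule qd)
    moreover have "dist (P (L * real n)) (P 0) \<le> dist ((g ^^ n) x0) (c (w n)) + dist (c (w n)) (c 0) + dist (c 0) x0"
      using Pn P0 dist_triangle[of "(g ^^ n) x0" x0 "c (w n)"] dist_triangle[of "c (w n)" x0 "c 0"] by simp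
    ultimately show ?thesis using wd[of n] cd[of "w n" 0] w0[of n] L
      by (simp add: d0_def dist_commute mult.commute)
  qed
  have ti: "filterlim w at_top sequentially"
  proof (rule tinf_lemma[OF L])
    show "lam > 0" using lam by simp
    fix Z show "\<exists>B. \<forall>n. real n * L / lam \<ge> B \<longrightarrow> Z \<le> w n"
    proof (intro exI[of _ "Z + eps + (C2 + 1) + d0"] allI impI)
      fix n assume "Z + eps + (C2 + 1) + d0 \<le> real n * L / lam"
      then show "Z \<le> w n" using lower[of n] by linarith
    qed
  qed
  show ?thesis by (rule conv_generic2[OF p gs c M yD ti])
qed

lemma range_neg: "range (\<lambda>t::real. c (- t)) = range c"
proof
  show "range (\<lambda>t. c (- t)) \<subseteq> range c" by auto
  show "range c \<subseteq> range (\<lambda>t. c (- t))"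
  proof
    fix z assume "z \<in> range c"
    then obtain t where "z = c t" by auto
    then show "z \<in> range (\<lambda>t. c (- t))" by (intro image_eqI[of _ _ "- t"]) auto
  qed
qed

lemma minus_part:
  fixes g :: "'a::metric_space \<Rightarrow> 'a"
  assumes p: "proper_space TYPE('a)" and gs: "geodesic_space TYPE('a)"
    and iso: "isometry g" and pd: "pole_data g c"
  shows "converges_to_boundary (\<lambda>n. (inv g ^^ n) x) (morse_class (\<lambda>t. c (- t)))"
proof -
  obtain x0 \<sigma> N M where mc: "morse_concat g x0 \<sigma> N" and c: "biinf_geodesic c"
    and M: "N_morse_on M UNIV c"
    and fh1: "fin_hausdorff (range c) (range (concat_path g x0 \<sigma>))"
    and fh2: "fin_hausdorff (c ` {0..}) (concat_path g x0 \<sigma> ` {0..})"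
    using pd unfolding pole_data_def by blast
  define P where "P = concat_path g x0 \<sigma>"
  define L where "L = dist x0 (g x0)"
  have L: "L > 0" using mc by (simp add: morse_concat_def L_def)
  obtain lam eps where q: "quasi_geodesic_on UNIV lam eps P"
    using mc by (auto simp: morse_concat_def P_def)
  have lam: "lam \<ge> 1" using q by (simp add: quasi_geodesic_on_def)
  have qd: "\<And>s t. \<bar>s - t\<bar> / lam - eps \<le> dist (P s) (P t)" using q by (simp add: quasi_geodesic_on_def)
  obtain C1 where C1: "\<And>z. z \<in> range P \<Longrightarrow> infdist z (range c) \<le> C1"
    using fh1 unfolding fin_hausdorff_def P_def by blast
  obtain C2 where C2: "\<And>z. z \<in> c ` {0..} \<Longrightarrow> infdist z (P ` {0..}) \<le> C2"
    using fh2 unfolding fin_hausdorff_def P_def by blast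
  have cd: "\<And>x y. dist (c x) (c y) = \<bar>x - y\<bar>" using c by (simp add: biinf_geodesic_def)
  have Pn: "P (- (L * real n)) = (inv g ^^ n) x0" for n
    using concat_mult[OF mc, of "- int n"] by (simp add: P_def L_def gpow_neg)
  have P0: "P 0 = x0" using Pn[of 0] by simp
  have "\<forall>n. \<exists>w. dist ((inv g ^^ n) x0) (c w) \<le> C1 + 1"
  proof
    fix n
    have "P (- (L * real n)) \<in> range P" by simp
    then have "infdist ((inv g ^^ n) x0) (range c) \<le> C1" using C1[of "P (- (L * real n))"] Pn[of n] by simp
    then show "\<exists>w. dist ((inv g ^^ n) x0) (c w) \<le> C1 + 1" by (rule infdist_ex_range)
  qed
  then obtain w where wd: "\<And>n. dist ((inv g ^^ n) x0) (c (w n)) \<le> C1 + 1" by metis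
  define c' where "c' = (\<lambda>t. c (- t))"
  define tt where "tt n = - w n" for n
  have c': "biinf_geodesic c'" using c by (simp add: biinf_geodesic_def c'_def abs_minus_commute)
  have M': "N_morse_on M UNIV c'" unfolding c'_def by (rule N_morse_range[OF range_neg M])
  have yD: "dist ((inv g ^^ n) x) (c' (tt n)) \<le> dist x x0 + (C1 + 1)" for n
    using dist_triangle[of "(inv g ^^ n) x" "c (w n)" "(inv g ^^ n) x0"] iso_pow[OF iso_inv[OF iso], of n x x0] wd[of n]
    by (simp add: c'_def tt_def)
  define d0 where "d0 = dist x0 (c 0)"
  have lower: "real n * L / lam - eps - (C1 + 1) - d0 \<le> \<bar>w n\<bar>" for n
  proof -
    have "\<bar>- (L * real n) - 0\<bar> / lam - eps \<le> dist (P (- (L * real n))) (P 0)" by (rule qd)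
    moreover have "dist (P (- (L * real n))) (P 0) \<le> dist ((inv g ^^ n) x0) (c (w n)) + dist (c (w n)) (c 0) + dist (c 0) x0"
      using Pn P0 dist_triangle[of "(inv g ^^ n) x0" x0 "c (w n)"] dist_triangle[of "c (w n)" x0 "c 0"] by simp
    ultimately show ?thesis using wd[of n] cd[of "w n" 0] L
      by (simp add: d0_def dist_commute mult.commute)
  qed
  have neg: "w n < 0" if big: "real n * L / lam > eps + (C1 + 1) + (C2 + 1)" for n
  proof (rule ccontr)
    assume "\<not> w n < 0"
    then have "c (w n) \<in> c ` {0..}" by auto
    then have "infdist (c (w n)) (P ` {0..}) \<le> C2" by (rule C2)
    moreover have ne: "P ` {0..} \<noteq> {}" by auto
    ultimately obtain a where "a \<in> P ` {0..}" "dist (c (w n)) a \<le> C2 + 1"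
      using infdist_ex_le[OF ne] by blast
    then obtain s where s: "s \<ge> 0" "dist (c (w n)) (P s) \<le> C2 + 1" by auto
    have "dist (P (- (L * real n))) (P s) \<le> dist (P (- (L * real n))) (c (w n)) + dist (c (w n)) (P s)"
      by (rule dist_triangle)
    then have d: "dist (P (- (L * real n))) (P s) \<le> (C1 + 1) + (C2 + 1)" using s wd[of n] Pn[of n] by simp
    have "\<bar>- (L * real n) - s\<bar> / lam - eps \<le> dist (P (- (L * real n))) (P s)" by (rule qd)
    moreover have "real n * L / lam \<le> \<bar>- (L * real n) - s\<bar> / lam"
      using s L lam by (intro divide_right_mono) (auto simp: mult.commute)
    ultimately show False using d big by linarith
  qed
  have ti: "filterlim tt at_top sequentially"
  proof (rule tinf_lemma[OF L])
    show "lam > 0" using lam by simp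
    fix Z show "\<exists>B. \<forall>n. real n * L / lam \<ge> B \<longrightarrow> Z \<le> tt n"
    proof (intro exI[of _ "max (Z + eps + (C1 + 1) + d0) (eps + (C1 + 1) + (C2 + 1) + 1)"] allI impI)
      fix n assume n: "max (Z + eps + (C1 + 1) + d0) (eps + (C1 + 1) + (C2 + 1) + 1) \<le> real n * L / lam"
      then have "w n < 0" by (intro neg) linarith
      then show "Z \<le> tt n" using lower[of n] n by (simp add: tt_def)
    qed
  qed
  show ?thesis unfolding c'_def[symmetric] by (rule conv_generic2[OF p gs c' M' yD ti])
qed

theorem proposition6p12:
  fixes g :: "'a::metric_space \<Rightarrow> 'a" and gplus gminus :: "(real \<Rightarrow> 'a) set"
  assumes "proper_space TYPE('a)" and "geodesic_space TYPE('a)"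
    and "morse_isometry g"
    and "pole_plus g gplus" and "pole_minus g gminus"
  shows "\<forall>x. converges_to_boundary (\<lambda>n. (g ^^ n) x) gplus \<and>
             converges_to_boundary (\<lambda>n. (inv g ^^ n) x) gminus"
proof
  fix x
  have iso: "isometry g" using assms(3) by (simp add: morse_isometry_def)
  obtain c1 where c1: "pole_data g c1" "gplus = morse_class c1" using assms(4) by (auto simp: pole_plus_def)
  obtain c2 where c2: "pole_data g c2" "gminus = morse_class (\<lambda>t. c2 (- t))"
    using assms(5) by (auto simp: pole_minus_def)
  show "converges_to_boundary (\<lambda>n. (g ^^ n) x) gplus \<and>
        converges_to_boundary (\<lambda>n. (inv g ^^ n) x) gminus"
    using plus_part[OF assms(1,2) iso c1(1)] minus_part[OF assms(1,2) iso c2(1)] c1(2) c2(2) by simp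
qed

end
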